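(* Let $\mathcal C\subset\mathbb R^n$ be compact with non-empty interior, boundary of Lebesgue measure zero, and $\mathcal C=-\mathcal C$. Put $\mathcal C^+=\mathcal C\cap\{y_n>0\}$, $\mathcal W=\mathrm{pr}(\mathcal C^+)$, $\widetilde{\mathcal C}^+=\{(\delta v',v'',v_n):(v',v'',v_n)\in\mathcal C^+,\ 0\le\delta\le1\}$ and $\widetilde{\mathcal A}_t=\widetilde{\mathcal C}^+\,\mathrm{diag}(e^{-nt}1_k,1_m,1)$ for $t\in\mathbb R$. Then for every $x\in\mathcal X$ for which $\xi_1(x,1)$ exists (i.e. the hitting-time multiset for $\mathcal W$ at $L=1$ is nonempty), $$\lim_{t\to\infty}r_1(x,\mathcal H(\widetilde{\mathcal A}_t))=|\xi_1(x,1)|.$$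
   Context: Fix integers $k\ge1$, $m\ge0$, $n=k+m+1$; $G=\mathrm{SL}(n,\mathbb R)$, $\Gamma=\mathrm{SL}(n,\mathbb Z)$, $\mathcal X=\Gamma\backslash G$. Row vectors $y=(y',y'',y_n)\in\mathbb R^k\times\mathbb R^m\times\mathbb R$, $G$ acting from the right; $\widehat{\mathbb Z}^n$ is the set of primitive integer vectors. $U(s)=\begin{pmatrix}1_k&0&0\\0&1_m&0\\-s&0&1\end{pmatrix}$ for $s\in\mathbb R^k$ (middle block absent if $m=0$), $h_s(x)=xU(s)$. Fix a norm $|\cdot|$ on $\mathbb R^k$. $\mathrm{pr}:\mathbb R^n\to\mathbb R^{m+1}$, $(y_1,\dots,y_n)\mapsto(y_{k+1},\dots,y_n)$. For Borel $\mathcal C\subset\mathbb R^n$, $\mathcal H(\mathcal C)=\{\Gamma g:\widehat{\mathbb Z}^ng\cap\mathcal C\ne\emptyset\}$; for $E\subset\mathcal X$, $r_1(x,E)=\inf\{|s|:h_s(x)\in E\}$. For $\mathcal W\subset\mathbb R^m\times\mathbb R_{>0}$, $x=\Gamma g$ and $L>0$, the hitting times $\xi_1(x,L),\xi_2(x,L),\dots$ list with multiplicity the multiset $\{v'/v_n: v\in\widehat{\mathbb Z}^ng,\ (v'',v_n)\in L^{-1}\mathcal W\}$ in order of nondecreasing $|\cdot|$ (the times at which $h_s(x)$ meets the section $\Gamma\backslash\Gamma H\{R(w):w\in L^{-1}\mathcal W\}$). *)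

theory Defs
  imports "HOL-Analysis.Analysis"
begin

text \<open>R^n is represented as real^('k + 'p): the coordinates indexed by
  Inl i (i :: 'k) form y' (so k = CARD('k) \<ge> 1), the coordinates indexed by Inr j
  (j :: 'p, a finite linear order with CARD('p) = m + 1) form (y'', y_n), where y_n is the
  coordinate at the greatest index of 'p and y'' are the remaining m coordinates.
  Vectors are row vectors; the matrix group acts from the right via v v* g.\<close>

definition lastp :: "'p::{finite,linorder}" where
  "lastp = Max UNIV"

definition vn :: "real^('k::finite + 'p::{finite,linorder}) \<Rightarrow> real" where
  "vn v = v $ Inr lastp"

definition vk :: "real^('k::finite + 'p::{finite,linorder}) \<Rightarrow> real^'k" where
  "vk v = (\<chi> i. v $ Inl i)"

definition pr :: "real^('k::finite + 'p::{finite,linorder}) \<Rightarrow> real^'p::{finite,linorder}" where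
  "pr v = (\<chi> j. v $ Inr j)"

definition is_norm :: "(real^'k::finite \<Rightarrow> real) \<Rightarrow> bool" where
  "is_norm N \<longleftrightarrow> (\<forall>x. N x = 0 \<longleftrightarrow> x = 0) \<and> (\<forall>c x. N (c *\<^sub>R x) = \<bar>c\<bar> * N x)
      \<and> (\<forall>x y. N (x + y) \<le> N x + N y)"

definition SLn :: "(real^'n::finite^'n) set" where
  "SLn = {g. det g = 1}"

definition Gamma :: "(real^'n::finite^'n) set" where
  "Gamma = {g. det g = 1 \<and> (\<forall>i j. g $ i $ j \<in> \<int>)}"

definition coset :: "real^'n::finite^'n \<Rightarrow> (real^'n^'n) set" where
  "coset g = {\<gamma> ** g | \<gamma>. \<gamma> \<in> Gamma}"

definition Xspace :: "(real^'n::finite^'n) set set" where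
  "Xspace = coset ` SLn"

definition primitive :: "real^'n::finite \<Rightarrow> bool" where
  "primitive a \<longleftrightarrow> (\<forall>i. a $ i \<in> \<int>) \<and> a \<noteq> 0 \<and>
     (\<forall>d::int. (\<forall>i. \<exists>z::int. a $ i = of_int d * of_int z) \<longrightarrow> \<bar>d\<bar> = 1)"

text \<open>The set of primitive lattice vectors of x = \<Gamma>g, i.e. \<widehat>Z^n g (independent of
  the representative g).\<close>
definition prim_pts :: "(real^'n::finite^'n) set \<Rightarrow> (real^'n) set" where
  "prim_pts x = {a v* g | a g. g \<in> x \<and> primitive a}"

definition hH :: "(real^'n::finite) set \<Rightarrow> (real^'n^'n) set set" where
  "hH C = {x \<in> Xspace. prim_pts x \<inter> C \<noteq> {}}"

definition Umat :: "real^'k::finite \<Rightarrow> real^('k + 'p::{finite,linorder})^('k + 'p)" where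
  "Umat s = (\<chi> i j. if i = j then 1
      else if i = Inr lastp then (case j of Inl l \<Rightarrow> - (s $ l) | Inr _ \<Rightarrow> 0) else 0)"

definition hs :: "real^'k::finite \<Rightarrow> (real^('k + 'p::{finite,linorder})^('k + 'p)) set
     \<Rightarrow> (real^('k + 'p)^('k + 'p)) set" where
  "hs s x = (\<lambda>g. g ** Umat s) ` x"

definition r1 :: "(real^'k::finite \<Rightarrow> real) \<Rightarrow> (real^('k + 'p::{finite,linorder})^('k + 'p)) set
     \<Rightarrow> (real^('k + 'p)^('k + 'p)) set set \<Rightarrow> real" where
  "r1 N x E = Inf {N s | s. hs s x \<in> E}"

definition hit_times :: "(real^'p::{finite,linorder}) set \<Rightarrow> (real^('k::finite + 'p)^('k + 'p)) set
     \<Rightarrow> real \<Rightarrow> (real^'k) set" where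
  "hit_times W x L = {(1 / vn v) *\<^sub>R vk v | v. v \<in> prim_pts x \<and> pr v \<in> (\<lambda>w. (1 / L) *\<^sub>R w) ` W}"

definition xi1_abs :: "(real^'k::finite \<Rightarrow> real) \<Rightarrow> (real^'p::{finite,linorder}) set
     \<Rightarrow> (real^('k + 'p)^('k + 'p)) set \<Rightarrow> real \<Rightarrow> real" where
  "xi1_abs N W x L = Inf (N ` hit_times W x L)"

definition Cplus :: "(real^('k::finite + 'p::{finite,linorder})) set \<Rightarrow> (real^('k + 'p)) set" where
  "Cplus C = C \<inter> {y. vn y > 0}"

definition scale_k :: "real \<Rightarrow> real^('k::finite + 'p::finite) \<Rightarrow> real^('k + 'p)" where
  "scale_k \<delta> v = (\<chi> i. case i of Inl _ \<Rightarrow> \<delta> * v $ i | Inr _ \<Rightarrow> v $ i)"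

definition Ctilde :: "(real^('k::finite + 'p::{finite,linorder})) set \<Rightarrow> (real^('k + 'p)) set" where
  "Ctilde C = {scale_k \<delta> v | \<delta> v. v \<in> Cplus C \<and> 0 \<le> \<delta> \<and> \<delta> \<le> 1}"

definition diag_t :: "real \<Rightarrow> real^('k::finite + 'p::finite)^('k + 'p)" where
  "diag_t t = (\<chi> i j. if i = j then (case i of Inl _ \<Rightarrow> exp (- real CARD('k + 'p) * t) | Inr _ \<Rightarrow> 1) else 0)"

definition Atilde :: "(real^('k::finite + 'p::{finite,linorder})) set \<Rightarrow> real \<Rightarrow> (real^('k + 'p)) set" where
  "Atilde C t = (\<lambda>y. y v* diag_t t) ` Ctilde C"

end

theory Submission
  imports Defs "HOL-Library.FuncSet"
begin


lemma isn_zero: "is_norm N \<Longrightarrow> (N x = 0) = (x = 0)"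
  unfolding is_norm_def by (drule conjunct1) (erule spec)
lemma isn_scale: "is_norm N \<Longrightarrow> N (c *\<^sub>R x) = \<bar>c\<bar> * N x"
  unfolding is_norm_def by (drule conjunct2, drule conjunct1) (erule allE, erule spec)
lemma isn_tri: "is_norm N \<Longrightarrow> N (x + y) \<le> N x + N y"
  unfolding is_norm_def by (drule conjunct2, drule conjunct2) (erule allE, erule spec)

lemma normN_nonneg: assumes "is_norm N" shows "0 \<le> N x"
proof -
  have "N (x + (-x)) \<le> N x + N (-x)" by (rule isn_tri[OF assms])
  moreover have "N (-x) = N x"
  proof -
    have "N (-x) = N ((-1) *\<^sub>R x)" by simp
    also have "\<dots> = \<bar>-1\<bar> * N x" by (rule isn_scale[OF assms])
    finally show ?thesis by simp
  qed
  moreover have "N 0 = 0" using isn_zero[OF assms, of 0] by simp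
  ultimately show ?thesis by simp
qed

lemma normN_sum: assumes "is_norm N" shows "N (sum f A) \<le> (\<Sum>i\<in>A. N (f i))"
proof (induction A rule: infinite_finite_induct)
  case (infinite A)
  have "N 0 = 0" using isn_zero[OF assms, of 0] by simp
  then show ?case using infinite by simp
next
  case empty
  have "N 0 = 0" using isn_zero[OF assms, of 0] by simp
  then show ?case by simp
next
  case (insert a A)
  have "N (sum f (insert a A)) = N (f a + sum f A)" using insert by simp
  also have "\<dots> \<le> N (f a) + N (sum f A)" by (rule isn_tri[OF assms])
  finally have h: "N (sum f (insert a A)) \<le> N (f a) + N (sum f A)" .
  have "(\<Sum>i\<in>insert a A. N (f i)) = N (f a) + (\<Sum>i\<in>A. N (f i))" using insert.hyps by simp
  then show ?case using h insert.IH by linarith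
qed

lemma normN_upper: assumes "is_norm N"
  shows "N (y::real^'k::finite) \<le> (\<Sum>i\<in>UNIV. \<bar>y$i\<bar> * N (axis i 1))"
proof -
  have "y = (\<Sum>i\<in>UNIV. (y$i) *\<^sub>R axis i 1)"
  proof (subst vec_eq_iff, intro allI)
    fix j
    have "(\<Sum>i\<in>UNIV. (y$i) *\<^sub>R axis i (1::real)) $ j = (\<Sum>i\<in>UNIV. (y$i) * (axis i 1 $ j))"
      by (simp add: sum_component)
    also have "\<dots> = (\<Sum>i\<in>(UNIV::'k set). if i = j then y$i else 0)"
      by (intro sum.cong) (auto simp: axis_def)
    also have "\<dots> = y$j" by simp
    finally show "y $ j = (\<Sum>i\<in>UNIV. (y$i) *\<^sub>R axis i 1) $ j" by simp
  qed
  then have "N y = N (\<Sum>i\<in>UNIV. (y$i) *\<^sub>R axis i 1)" by simp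
  also have "\<dots> \<le> (\<Sum>i\<in>UNIV. N ((y$i) *\<^sub>R axis i 1))" by (rule normN_sum[OF assms])
  also have "\<dots> = (\<Sum>i\<in>UNIV. \<bar>y$i\<bar> * N (axis i 1))"
    by (simp add: isn_scale[OF assms])
  finally show ?thesis .
qed

lemma normN_bound: assumes "is_norm N"
  shows "\<exists>K\<ge>0. \<forall>y::real^'k::finite. N y \<le> K * norm y"
proof -
  define K where "K = (\<Sum>i\<in>(UNIV::'k set). N (axis i 1))"
  have K0: "K \<ge> 0" unfolding K_def by (intro sum_nonneg normN_nonneg[OF assms])
  have "N y \<le> K * norm y" for y :: "real^'k"
  proof -
    have "N y \<le> (\<Sum>i\<in>UNIV. \<bar>y$i\<bar> * N (axis i 1))" by (rule normN_upper[OF assms])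
    also have "\<dots> \<le> (\<Sum>i\<in>UNIV. norm y * N (axis i 1))"
      by (intro sum_mono mult_right_mono component_le_norm_cart normN_nonneg[OF assms])
    also have "\<dots> = K * norm y" unfolding K_def by (simp add: sum_distrib_left mult.commute)
    finally show ?thesis .
  qed
  then show ?thesis using K0 by blast
qed

lemma normN_diff: assumes "is_norm N" shows "N x - N y \<le> N (x - y)"
proof -
  have "N x = N ((x - y) + y)" by simp
  also have "\<dots> \<le> N (x - y) + N y" by (rule isn_tri[OF assms])
  finally show ?thesis by simp
qed

lemma normN_lower: assumes "is_norm N"
  shows "\<exists>c>0. \<forall>y::real^'k::finite. c * norm y \<le> N y"
proof -
  obtain K where K: "K \<ge> 0" "\<And>y::real^'k. N y \<le> K * norm y" using normN_bound[OF assms] by blast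
  have "lipschitz_on K UNIV N"
  proof (rule lipschitz_onI)
    fix x y :: "real^'k"
    have "N x - N y \<le> K * norm (x - y)" using normN_diff[OF assms, of x y] K(2)[of "x-y"] by linarith
    moreover have "N y - N x \<le> K * norm (x - y)" using normN_diff[OF assms, of y x] K(2)[of "y-x"]
      by (simp add: norm_minus_commute)
    ultimately show "dist (N x) (N y) \<le> K * dist x y" by (simp add: dist_real_def dist_norm abs_le_iff)
  qed (use K in auto)
  then have cont: "continuous_on (sphere 0 1) N"
    using lipschitz_on_continuous_on lipschitz_on_subset by blast
  have ne: "sphere (0::real^'k) 1 \<noteq> {}" by simp
  obtain z where z: "z \<in> sphere 0 1" "\<And>y. y \<in> sphere 0 1 \<Longrightarrow> N z \<le> N y"
    using continuous_attains_inf[OF compact_sphere ne cont] by blast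
  have "z \<noteq> 0" using z(1) by auto
  then have "N z \<noteq> 0" using isn_zero[OF assms, of z] by simp
  then have c0: "N z > 0" using normN_nonneg[OF assms, of z] by linarith
  have "N z * norm y \<le> N y" for y
  proof (cases "y = 0")
    case True then show ?thesis using normN_nonneg[OF assms, of 0] by simp
  next
    case False
    have "(1/norm y) *\<^sub>R y \<in> sphere 0 1" using False by simp
    then have "N z \<le> N ((1/norm y) *\<^sub>R y)" by (rule z(2))
    also have "\<dots> = N y / norm y" by (simp add: isn_scale[OF assms])
    finally show ?thesis using False by (simp add: field_simps)
  qed
  then show ?thesis using c0 by blast
qed



lemma sum_single: "(\<And>i. i \<noteq> a \<Longrightarrow> f i = 0) \<Longrightarrow> sum f (UNIV::'a::finite set) = f a"
proof -
  assume h: "\<And>i. i \<noteq> a \<Longrightarrow> f i = 0"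
  have "sum f UNIV = sum f {a}" by (rule sum.mono_neutral_right) (auto simp: h)
  then show ?thesis by simp
qed

lemma vU_Inl: "(v v* (Umat s :: real^('k::finite + 'p::{finite,linorder})^('k + 'p))) $ Inl l = v $ Inl l - s$l * vn v"
proof -
  have "(v v* (Umat s :: real^('k + 'p)^('k + 'p))) $ Inl l
     = (\<Sum>i\<in>UNIV. (if i = Inl l then v$i else 0) + (if i = Inr lastp then - s$l * v$i else 0))"
    by (auto simp: vector_matrix_mult_def Umat_def intro!: sum.cong)
  also have "\<dots> = v $ Inl l - s$l * vn v" by (simp add: sum.distrib vn_def)
  finally show ?thesis .
qed

lemma vU_Inr: "(v v* (Umat s :: real^('k::finite + 'p::{finite,linorder})^('k + 'p))) $ Inr j = v $ Inr j"
  unfolding vector_matrix_mult_def Umat_def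
  by (simp, subst sum_single[of "Inr j"]) auto

lemma vD_Inl: "(y v* (diag_t t :: real^('k::finite + 'p::finite)^('k + 'p))) $ Inl l = exp (- real CARD('k + 'p) * t) * y $ Inl l"
  unfolding vector_matrix_mult_def diag_t_def
  by (simp, subst sum_single[of "Inl l"]) auto

lemma vD_Inr: "(y v* (diag_t t :: real^('k::finite + 'p::finite)^('k + 'p))) $ Inr j = y $ Inr j"
  unfolding vector_matrix_mult_def diag_t_def
  by (simp, subst sum_single[of "Inr j"]) auto

lemma sk_Inl: "scale_k d v $ Inl l = d * v $ Inl l" by (simp add: scale_k_def)
lemma sk_Inr: "scale_k d v $ Inr j = v $ Inr j" by (simp add: scale_k_def)

lemma det_Umat: "det (Umat s :: real^('k::finite + 'p::{finite,linorder})^('k + 'p)) = 1"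
proof -
  let ?A = "mat 1 :: real^('k + 'p)^('k + 'p)"
  define i :: "'k + 'p" where "i = Inr lastp"
  define x where "x = (\<Sum>l\<in>UNIV. (- s$l) *s row (Inl l) ?A)"
  have "x \<in> vec.span {row j ?A |j. j \<noteq> i}"
    unfolding x_def
    by (intro vec.span_sum vec.span_scale vec.span_base) (auto simp: i_def)
  from det_row_span[OF this] have "det (\<chi> k. if k = i then row i ?A + x else row k ?A) = 1"
    by simp
  moreover have "(\<chi> k. if k = i then row i ?A + x else row k ?A) = Umat s"
  proof -
    have xc: "x $ j = (case j of Inl l \<Rightarrow> - s$l | Inr _ \<Rightarrow> 0)" for j
    proof (cases j)
      case (Inl l)
      have "x $ j = - s$l"
        unfolding x_def using Inl by (simp add: sum_component row_def mat_def, subst sum_single[of l]) auto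
      then show ?thesis using Inl by simp
    next
      case (Inr q) then show ?thesis unfolding x_def by (simp add: sum_component row_def mat_def)
    qed
    show ?thesis unfolding Umat_def
      by (intro vec_eq_iff[THEN iffD2] allI) (auto simp: xc row_def mat_def i_def split: sum.splits)
  qed
  ultimately show ?thesis by simp
qed

lemma prim_pts_hs: "prim_pts (hs s x) = (\<lambda>v. v v* Umat s) ` prim_pts x"
proof
  show "prim_pts (hs s x) \<subseteq> (\<lambda>v. v v* Umat s) ` prim_pts x"
  proof
    fix w assume "w \<in> prim_pts (hs s x)"
    then obtain a g where "w = a v* (g ** Umat s)" "g \<in> x" "primitive a"
      unfolding prim_pts_def hs_def by auto
    then show "w \<in> (\<lambda>v. v v* Umat s) ` prim_pts x"
      unfolding prim_pts_def by (auto simp flip: vector_matrix_mul_assoc)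
  qed
next
  show "(\<lambda>v. v v* Umat s) ` prim_pts x \<subseteq> prim_pts (hs s x)"
  proof
    fix w assume "w \<in> (\<lambda>v. v v* Umat s) ` prim_pts x"
    then obtain a g where "w = (a v* g) v* Umat s" "g \<in> x" "primitive a"
      unfolding prim_pts_def by auto
    then show "w \<in> prim_pts (hs s x)"
      unfolding prim_pts_def hs_def by (auto simp: vector_matrix_mul_assoc)
  qed
qed

lemma hs_Xspace: assumes "x \<in> Xspace" shows "hs s x \<in> Xspace"
proof -
  obtain g where g: "det g = 1" "x = coset g" using assms unfolding Xspace_def SLn_def by auto
  have "hs s x = coset (g ** Umat s)"
    unfolding g(2) hs_def coset_def by (auto simp: matrix_mul_assoc)
  moreover have "det (g ** Umat s) = 1" by (simp add: det_mul det_Umat g(1))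
  ultimately show ?thesis unfolding Xspace_def SLn_def by auto
qed



lemma finite_int_box: "finite {b :: real^'n::finite. \<forall>j. b$j \<in> \<int> \<and> \<bar>b$j\<bar> \<le> E}"
proof -
  let ?F = "PiE (UNIV::'n set) (\<lambda>_. {-\<lceil>E\<rceil>..\<lceil>E\<rceil>})"
  have "finite ?F" by (intro finite_PiE) auto
  moreover have "{b :: real^'n. \<forall>j. b$j \<in> \<int> \<and> \<bar>b$j\<bar> \<le> E} \<subseteq> (\<lambda>f. \<chi> j. real_of_int (f j)) ` ?F"
  proof
    fix b :: "real^'n" assume b: "b \<in> {b. \<forall>j. b$j \<in> \<int> \<and> \<bar>b$j\<bar> \<le> E}"
    define f where "f = (\<lambda>j. \<lfloor>b$j\<rfloor>)"
    have bj: "b$j = real_of_int (f j)" for j using b unfolding f_def by (auto elim: Ints_cases)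
    have "f j \<in> {-\<lceil>E\<rceil>..\<lceil>E\<rceil>}" for j
    proof -
      have "\<bar>real_of_int (f j)\<bar> \<le> E" using b bj[of j] by (metis (mono_tags, lifting) mem_Collect_eq)
      then show ?thesis by (auto simp: abs_le_iff) linarith+
    qed
    then have "f \<in> ?F" by (auto simp: PiE_iff)
    moreover have "b = (\<chi> j. real_of_int (f j))" by (simp add: vec_eq_iff bj)
    ultimately show "b \<in> (\<lambda>f. \<chi> j. real_of_int (f j)) ` ?F" by blast
  qed
  ultimately show ?thesis using finite_subset by blast
qed

lemma finite_lattice_bdd:
  fixes x :: "(real^'n::finite^'n) set"
  assumes "x \<in> Xspace" "D \<ge> 0"
  shows "finite {v \<in> prim_pts x. \<forall>i. \<bar>v$i\<bar> \<le> D}"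
proof -
  obtain g where g: "det g = 1" "x = coset g" using assms unfolding Xspace_def SLn_def by auto
  have inv: "invertible g" using g(1) by (simp add: invertible_det_nz)
  then obtain G where gG: "g ** G = mat 1" unfolding invertible_def by blast
  define E where "E = D * (\<Sum>j\<in>UNIV. \<Sum>i\<in>UNIV. \<bar>G$i$j\<bar>)"
  have "{v \<in> prim_pts x. \<forall>i. \<bar>v$i\<bar> \<le> D} \<subseteq> (\<lambda>b. b v* g) ` {b. \<forall>j. b$j \<in> \<int> \<and> \<bar>b$j\<bar> \<le> E}"
  proof
    fix v assume v: "v \<in> {v \<in> prim_pts x. \<forall>i. \<bar>v$i\<bar> \<le> D}"
    then obtain a \<gamma> where a: "v = a v* (\<gamma> ** g)" "\<gamma> \<in> Gamma" "primitive a"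
      unfolding prim_pts_def g(2) coset_def by auto
    define b where "b = a v* \<gamma>"
    have vb: "v = b v* g" unfolding b_def a(1) by (simp add: vector_matrix_mul_assoc)
    have bint: "b$j \<in> \<int>" for j
      using a(2,3) unfolding b_def vector_matrix_mult_def Gamma_def primitive_def
      by (auto intro!: Ints_sum Ints_mult)
    have bv: "b = v v* G" unfolding vb vector_matrix_mul_assoc gG by simp
    have "\<bar>b$j\<bar> \<le> E" for j
    proof -
      have "\<bar>b$j\<bar> = \<bar>\<Sum>i\<in>UNIV. G$i$j * v$i\<bar>" unfolding bv vector_matrix_mult_def by (simp add: mult.commute)
      also have "\<dots> \<le> (\<Sum>i\<in>UNIV. \<bar>G$i$j\<bar> * D)"
        by (rule order_trans[OF sum_abs], intro sum_mono) (use v in \<open>auto simp: abs_mult intro: mult_left_mono\<close>)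
      also have "\<dots> = D * (\<Sum>i\<in>UNIV. \<bar>G$i$j\<bar>)" by (simp add: sum_distrib_left mult.commute)
      also have "\<dots> \<le> E" unfolding E_def
        by (intro mult_left_mono assms(2) member_le_sum) (auto intro: sum_nonneg)
      finally show ?thesis .
    qed
    then show "v \<in> (\<lambda>b. b v* g) ` {b. \<forall>j. b$j \<in> \<int> \<and> \<bar>b$j\<bar> \<le> E}" using vb bint by blast
  qed
  then show ?thesis using finite_subset finite_imageI[OF finite_int_box] by blast
qed



lemma vn_pr: "vn v = pr v $ lastp" by (simp add: vn_def pr_def)

lemma pr_eq_iff: "pr v = pr w \<longleftrightarrow> (\<forall>j. v $ Inr j = w $ Inr j)"
  by (simp add: pr_def vec_eq_iff)

lemma hit_in:
  fixes C :: "(real^('k::finite + 'p::{finite,linorder})) set"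
    and x :: "(real^('k + 'p)^('k + 'p)) set"
  assumes "x \<in> Xspace" "v \<in> prim_pts x" "w \<in> Cplus C" "pr v = pr w"
  shows "hs ((1 / vn v) *\<^sub>R vk v) x \<in> hH (Atilde C t)"
proof -
  have vnpos: "vn v > 0" using assms(3,4) unfolding Cplus_def by (simp add: vn_pr)
  let ?u = "v v* Umat ((1 / vn v) *\<^sub>R vk v)"
  have "?u = scale_k 0 w v* diag_t t"
  proof (subst vec_eq_iff, intro allI)
    fix i :: "'k + 'p"
    show "?u $ i = (scale_k 0 w v* diag_t t) $ i"
    proof (cases i)
      case (Inl l) then show ?thesis using vnpos by (simp add: vU_Inl vD_Inl sk_Inl vk_def)
    next
      case (Inr j) then show ?thesis using assms(4) by (simp add: vU_Inr vD_Inr sk_Inr pr_eq_iff)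
    qed
  qed
  moreover have "scale_k 0 w \<in> Ctilde C" unfolding Ctilde_def using assms(3) by force
  ultimately have "?u \<in> Atilde C t" unfolding Atilde_def by (rule image_eqI)
  moreover have "?u \<in> prim_pts (hs ((1 / vn v) *\<^sub>R vk v) x)" using assms(2) by (simp add: prim_pts_hs)
  ultimately show ?thesis unfolding hH_def using hs_Xspace[OF assms(1)] by blast
qed

lemma hit_out:
  fixes C :: "(real^('k::finite + 'p::{finite,linorder})) set"
    and x :: "(real^('k + 'p)^('k + 'p)) set"
  assumes "hs s x \<in> hH (Atilde C t)"
  obtains v w \<delta> where "v \<in> prim_pts x" "w \<in> Cplus C" "0 \<le> \<delta>" "\<delta> \<le> 1" "pr v = pr w"
    "\<And>l. v $ Inl l - s$l * vn v = exp (- real CARD('k + 'p) * t) * (\<delta> * w $ Inl l)"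
proof -
  obtain u where u: "u \<in> prim_pts (hs s x)" "u \<in> Atilde C t" using assms unfolding hH_def by blast
  then obtain v where v: "v \<in> prim_pts x" "u = v v* Umat s" by (auto simp: prim_pts_hs)
  obtain w \<delta> where w: "w \<in> Cplus C" "0 \<le> \<delta>" "\<delta> \<le> 1" "u = scale_k \<delta> w v* diag_t t"
    using u(2) unfolding Atilde_def Ctilde_def by blast
  have "pr v = pr w" unfolding pr_eq_iff
  proof
    fix j show "v $ Inr j = w $ Inr j" using arg_cong[OF trans[OF v(2)[symmetric] w(4)], of "\<lambda>z. z $ Inr j"]
      by (simp add: vU_Inr vD_Inr sk_Inr)
  qed
  moreover have "v $ Inl l - s$l * vn v = exp (- real CARD('k + 'p) * t) * (\<delta> * w $ Inl l)" for l
    using arg_cong[OF trans[OF v(2)[symmetric] w(4)], of "\<lambda>z. z $ Inl l"]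
    by (simp add: vU_Inl vD_Inl sk_Inl)
  ultimately show ?thesis using that v(1) w by blast
qed



theorem lemma2:
  fixes C :: "(real^('k::finite + 'p::{finite,linorder})) set"
    and N :: "real^'k \<Rightarrow> real"
    and x :: "(real^('k + 'p)^('k + 'p)) set"
  assumes "is_norm N"
    and "compact C" and "interior C \<noteq> {}" and "frontier C \<in> null_sets lebesgue"
    and "uminus ` C = C"
    and "x \<in> Xspace"
    and "hit_times (pr ` Cplus C) x 1 \<noteq> {}"
  shows "((\<lambda>t. r1 N x (hH (Atilde C t))) \<longlongrightarrow> xi1_abs N (pr ` Cplus C) x 1) at_top"
proof -
  note nN = assms(1)
  define HT where "HT = hit_times (pr ` Cplus C) x 1"
  define M where "M = xi1_abs N (pr ` Cplus C) x 1"
  define S where "S t = {N s | s. hs s x \<in> hH (Atilde C t)}" for t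
  have r1S: "r1 N x (hH (Atilde C t)) = Inf (S t)" for t unfolding r1_def S_def by simp
  have HT_iff: "\<xi> \<in> HT \<longleftrightarrow> (\<exists>v w. v \<in> prim_pts x \<and> w \<in> Cplus C \<and> pr v = pr w \<and> \<xi> = (1 / vn v) *\<^sub>R vk v)" for \<xi>
    unfolding HT_def hit_times_def by auto
  have bddHT: "bdd_below (N ` HT)" by (rule bdd_belowI[of _ 0]) (auto intro: normN_nonneg[OF nN])
  have M_le: "M \<le> N \<xi>" if "\<xi> \<in> HT" for \<xi>
    unfolding M_def xi1_abs_def HT_def[symmetric] using that bddHT by (auto intro: cInf_lower)
  have HTne: "HT \<noteq> {}" using assms(7) unfolding HT_def .
  have inS: "N \<xi> \<in> S t" if hx: "\<xi> \<in> HT" for \<xi> t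
  proof -
    obtain v w where vw: "v \<in> prim_pts x" "w \<in> Cplus C" "pr v = pr w" "\<xi> = (1 / vn v) *\<^sub>R vk v"
      using hx unfolding HT_iff by blast
    have "hs \<xi> x \<in> hH (Atilde C t)" unfolding vw(4) by (rule hit_in[OF assms(6) vw(1,2,3)])
    then show ?thesis unfolding S_def by blast
  qed
  have Sne: "S t \<noteq> {}" for t using HTne inS by blast
  have bddS: "bdd_below (S t)" for t
    unfolding S_def by (rule bdd_belowI[of _ 0]) (auto intro: normN_nonneg[OF nN])
  have upper: "Inf (S t) \<le> M" for t
  proof -
    have "Inf (S t) \<le> N \<xi>" if "\<xi> \<in> HT" for \<xi> using inS[OF that] bddS by (rule cInf_lower)
    then show ?thesis unfolding M_def xi1_abs_def HT_def[symmetric]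
      using HTne by (auto intro: cInf_greatest)
  qed
  obtain c where c: "c > 0" "\<And>y::real^'k. c * norm y \<le> N y" using normN_lower[OF nN] by blast
  obtain K where K: "K \<ge> 0" "\<And>y::real^'k. N y \<le> K * norm y" using normN_bound[OF nN] by blast
  obtain B0 where B0: "\<And>w. w \<in> C \<Longrightarrow> norm w \<le> B0"
    using compact_imp_bounded[OF assms(2)] unfolding bounded_iff by blast
  define B where "B = max B0 0"
  have B: "B \<ge> 0" "\<And>w. w \<in> C \<Longrightarrow> norm w \<le> B" using B0 unfolding B_def by force+
  obtain \<xi>0 where \<xi>0: "\<xi>0 \<in> HT" using HTne by blast
  define R where "R = N \<xi>0 + 1"
  have MR: "M < R" using M_le[OF \<xi>0] unfolding R_def by simp
  have R0: "R \<ge> 0" using normN_nonneg[OF nN, of \<xi>0] unfolding R_def by simp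
  define D where "D = B * (R / c) + B"
  have D0: "D \<ge> 0" unfolding D_def using B(1) R0 c(1) by simp
  define P where "P = {v \<in> prim_pts x. \<forall>i. \<bar>v$i\<bar> \<le> D}"
  have finP: "finite P" unfolding P_def by (rule finite_lattice_bdd[OF assms(6) D0])
  define \<mu> where "\<mu> = Min (insert 1 (vn ` {v \<in> P. vn v > 0}))"
  have \<mu>0: "\<mu> > 0" unfolding \<mu>_def using finP by (subst Min_gr_iff) auto
  have \<mu>le: "\<mu> \<le> vn v" if "v \<in> P" "vn v > 0" for v
    unfolding \<mu>_def using finP that by (intro Min_le) auto
  define E where "E = K * (real CARD('k) * B) / \<mu>"
  have E0: "E \<ge> 0" unfolding E_def using K(1) B(1) \<mu>0 by simp
  have lowerN: "M - exp (- t) * E \<le> N s" if t0: "t \<ge> 0" and hs: "hs s x \<in> hH (Atilde C t)" for s t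
  proof (cases "N s > R")
    case True
    have "0 \<le> exp (- t) * E" using E0 by simp
    then show ?thesis using MR True by linarith
  next
    case False
    have "c * norm s \<le> R" using c(2)[of s] False by linarith
    then have sR: "norm s \<le> R / c" using c(1) by (simp add: pos_le_divide_eq mult.commute)
    define e where "e = exp (- real CARD('k + 'p) * t)"
    obtain v w \<delta> where vw: "v \<in> prim_pts x" "w \<in> Cplus C" "0 \<le> \<delta>" "\<delta> \<le> 1" "pr v = pr w"
      "\<And>l. v $ Inl l - s$l * vn v = e * (\<delta> * w $ Inl l)"
      using hit_out[OF hs] unfolding e_def by metis
    have wC: "w \<in> C" and wn: "vn w > 0" using vw(2) unfolding Cplus_def by auto
    have vnv: "vn v = vn w" using vw(5) by (simp add: vn_pr)
    have wB: "\<bar>w $ i\<bar> \<le> B" for i using component_le_norm_cart[of w i] B(2)[OF wC] by linarith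
    have n1: "(1::real) \<le> real CARD('k + 'p)" using zero_less_card_finite[where 'a="'k + 'p"] by linarith
    have "1 * t \<le> real CARD('k + 'p) * t" using mult_right_mono[OF n1 t0] .
    then have ne: "- real CARD('k + 'p) * t \<le> - t" by linarith
    have e01: "0 < e" "e \<le> exp (- t)" unfolding e_def
      by (rule exp_gt_zero, rule exp_le_cancel_iff[THEN iffD2, OF ne])
    then have e1: "e \<le> 1" using t0 by (smt (verit) exp_le_one_iff)
    have Rc0: "0 \<le> R / c" by (rule divide_nonneg_nonneg[OF R0 less_imp_le[OF c(1)]])
    have "0 \<le> B * (R / c)" by (rule mult_nonneg_nonneg[OF B(1) Rc0])
    then have BD: "B \<le> D" unfolding D_def by linarith
    have "\<bar>v $ i\<bar> \<le> D" for i
    proof (cases i)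
      case (Inr j)
      have "v $ Inr j = w $ Inr j" using vw(5) by (simp add: pr_eq_iff)
      then show ?thesis using Inr wB[of i] BD by (metis order_trans)
    next
      case (Inl l)
      have sl: "\<bar>s$l\<bar> \<le> R / c" using component_le_norm_cart[of s l] sR by linarith
      have vnB: "\<bar>vn v\<bar> \<le> B" using wB[of "Inr lastp"] vnv unfolding vn_def by simp
      have a1: "\<bar>s$l * vn v\<bar> \<le> R / c * B" unfolding abs_mult
        by (rule mult_mono[OF sl vnB Rc0 abs_ge_zero])
      have a2: "\<bar>\<delta> * w$Inl l\<bar> \<le> \<bar>w$Inl l\<bar>"
      proof -
        have "\<bar>\<delta> * w$Inl l\<bar> = \<delta> * \<bar>w$Inl l\<bar>" using vw(3) by (simp add: abs_mult)
        also have "\<dots> \<le> 1 * \<bar>w$Inl l\<bar>" by (rule mult_right_mono[OF vw(4) abs_ge_zero])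
        finally show ?thesis by simp
      qed
      have a3: "\<bar>e * (\<delta> * w$Inl l)\<bar> \<le> \<bar>\<delta> * w$Inl l\<bar>"
      proof -
        have "\<bar>e * (\<delta> * w$Inl l)\<bar> = e * \<bar>\<delta> * w$Inl l\<bar>" using e01(1) by (simp add: abs_mult)
        also have "\<dots> \<le> 1 * \<bar>\<delta> * w$Inl l\<bar>" by (rule mult_right_mono[OF e1 abs_ge_zero])
        finally show ?thesis by simp
      qed
      have veq: "v $ Inl l = s$l * vn v + e * (\<delta> * w $ Inl l)" using vw(6)[of l] by simp
      have "\<bar>v $ Inl l\<bar> \<le> \<bar>s$l * vn v\<bar> + \<bar>e * (\<delta> * w $ Inl l)\<bar>" unfolding veq by (rule abs_triangle_ineq)
      moreover have "R / c * B = B * (R / c)" by (rule mult.commute)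
      ultimately show ?thesis using a1 a2 a3 wB[of "Inl l"] unfolding Inl D_def by linarith
    qed
    then have vP: "v \<in> P" unfolding P_def using vw(1) by blast
    have vnpos: "vn v > 0" using wn vnv by simp
    have \<mu>v: "\<mu> \<le> vn v" using \<mu>le[OF vP vnpos] .
    define \<xi> where "\<xi> = (1 / vn v) *\<^sub>R vk v"
    have \<xi>HT: "\<xi> \<in> HT" unfolding HT_iff \<xi>_def using vw by blast
    have sxi: "\<xi> - s = ((e * \<delta>) / vn v) *\<^sub>R vk w"
    proof (subst vec_eq_iff, intro allI)
      fix l
      have veq: "v $ Inl l = s$l * vn v + e * (\<delta> * w $ Inl l)" using vw(6)[of l] by simp
      have "(\<xi> - s) $ l = v $ Inl l / vn v - s$l" by (simp add: \<xi>_def vk_def)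
      also have "\<dots> = (s$l * vn v) / vn v + e * (\<delta> * w $ Inl l) / vn v - s$l"
        unfolding veq by (simp add: add_divide_distrib)
      also have "\<dots> = e * (\<delta> * w $ Inl l) / vn v" using vnpos by simp
      also have "\<dots> = (((e * \<delta>) / vn v) *\<^sub>R vk w) $ l" by (simp add: vk_def)
      finally show "(\<xi> - s) $ l = (((e * \<delta>) / vn v) *\<^sub>R vk w) $ l" .
    qed
    have nvk: "norm (vk w) \<le> real CARD('k) * B"
    proof -
      have "norm (vk w) \<le> (\<Sum>l\<in>UNIV. \<bar>vk w $ l\<bar>)" by (rule norm_le_l1_cart)
      also have "\<dots> \<le> (\<Sum>l\<in>(UNIV::'k set). B)" by (intro sum_mono) (simp add: vk_def wB)
      finally show ?thesis by simp
    qed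
    have "N (\<xi> - s) = \<bar>e * \<delta> / vn v\<bar> * N (vk w)"
      unfolding sxi by (rule isn_scale[OF nN])
    also have "\<bar>e * \<delta> / vn v\<bar> = e * \<delta> / vn v" using e01(1) vw(3) vnpos by simp
    finally have "N (\<xi> - s) = (e * \<delta> / vn v) * N (vk w)" .
    also have "\<dots> \<le> (exp (- t) / \<mu>) * (K * (real CARD('k) * B))"
    proof (rule mult_mono)
      show "e * \<delta> / vn v \<le> exp (- t) / \<mu>"
      proof -
        have "e * \<delta> \<le> exp (- t)" using e01 vw(3,4) by (smt (verit) mult_left_le)
        then have "e * \<delta> / vn v \<le> exp (- t) / vn v" using vnpos by (simp add: divide_right_mono)
        also have "\<dots> \<le> exp (- t) / \<mu>" using \<mu>0 \<mu>v by (simp add: frac_le)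
        finally show ?thesis .
      qed
      show "N (vk w) \<le> K * (real CARD('k) * B)"
        using K(2)[of "vk w"] nvk K(1) by (smt (verit) mult_left_mono)
    qed (use normN_nonneg[OF nN] \<mu>0 in auto)
    also have "\<dots> = exp (- t) * E" unfolding E_def by simp
    finally have "N (\<xi> - s) \<le> exp (- t) * E" .
    moreover have "N \<xi> - N s \<le> N (\<xi> - s)" by (rule normN_diff[OF nN])
    moreover have "M \<le> N \<xi>" using M_le[OF \<xi>HT] .
    ultimately show ?thesis by linarith
  qed
  have lower: "M - exp (- t) * E \<le> Inf (S t)" if "t \<ge> 0" for t
    using Sne by (rule cInf_greatest) (use lowerN[OF that] in \<open>auto simp: S_def\<close>)
  have lim: "((\<lambda>t. M - exp (- t) * E) \<longlongrightarrow> M) at_top"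
  proof -
    have "((\<lambda>t::real. exp (- t)) \<longlongrightarrow> 0) at_top"
      using filterlim_compose[OF exp_at_bot filterlim_uminus_at_bot_at_top] by simp
    then have "((\<lambda>t. M - exp (- t) * E) \<longlongrightarrow> M - 0 * E) at_top"
      by (intro tendsto_intros)
    then show ?thesis by simp
  qed
  have "((\<lambda>t. Inf (S t)) \<longlongrightarrow> M) at_top"
  proof (rule tendsto_sandwich[OF _ _ lim tendsto_const])
    show "\<forall>\<^sub>F t in at_top. M - exp (- t) * E \<le> Inf (S t)"
      using eventually_ge_at_top[of 0] by eventually_elim (rule lower)
    show "\<forall>\<^sub>F t in at_top. Inf (S t) \<le> M" by (simp add: upper)
  qed
  then show ?thesis unfolding r1S M_def .
qed


end
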